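(* Let $\Lambda$ be a left cancellative small category and $v\in\Lambda^0$. For $C\in v\Lambda^*$ let $\mathcal U^0_C=\{E\setminus\bigcup\mathcal F: E\in C,\ \mathcal F\subseteq\mathcal D^{(0)}_v\text{ finite and }\mathcal F\text{ does not cover }C\}$. Then $\mathcal U^0_C$ is an ultrafilter base in the ring $\mathcal A_v$; let $\mathcal U_C$ be the ultrafilter it generates. The map $C\mapsto\mathcal U_C$ is a bijection from $v\Lambda^*$ onto the set of ultrafilters in $\mathcal A_v$, with inverse $\mathcal U\mapsto\mathcal U\cap\mathcal D^{(0)}_v$.
   Context: A left cancellative small category (LCSC) is a small category $\Lambda$ such that $\alpha\beta=\alpha\gamma$ implies $\beta=\gamma$. Morphisms are composed as $\alpha\beta$ when $s(\alpha)=r(\beta)$; $\Lambda^0$ is the set of objects, identified with identity morphisms; $v\Lambda=\{\alpha:r(\alpha)=v\}$; $\alpha\Lambda=\{\alpha\beta:r(\beta)=s(\alpha)\}$. For $\alpha\in\Lambda$, $\tau^\alpha(\beta)=\alpha\beta$ on $s(\alpha)\Lambda$ and $\sigma^\alpha:\alpha\Lambda\to s(\alpha)\Lambda$ is its inverse. A zigzag is a tuple $\zeta=(\alpha_1,\beta_1,\dots,\alpha_n,\beta_n)$ with $r(\alpha_i)=r(\beta_i)$ and $s(\alpha_{i+1})=s(\beta_i)$; $s(\zeta)=s(\beta_n)$, $\mathcal Zv=\{\zeta:s(\zeta)=v\}$. The zigzag map $\varphi_\zeta=\sigma^{\alpha_1}\circ\tau^{\beta_1}\circ\cdots\circ\sigma^{\alpha_n}\circ\tau^{\beta_n}$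 (composition of partial maps) has domain $A(\zeta)\subseteq s(\zeta)\Lambda$. $\mathcal D^{(0)}_v$ is the set of nonempty $A(\zeta)$, $\zeta\in\mathcal Zv$ (closed under nonempty intersections), and $\mathcal A_v$ is the ring of subsets of $v\Lambda$ generated by $\mathcal D^{(0)}_v$. In a ring of sets $\mathcal A$, a filter is a nonempty collection of nonempty members closed under intersections and supersets (in $\mathcal A$), an ultrafilter is a maximal filter, and an ultrafilter base is a nonempty family of nonempty members such that the intersection of any two contains a third and the filter it generates (by closing under supersets) is an ultrafilter. A filter in $\mathcal D^{(0)}_v$ is a nonempty $C\subseteq\mathcal D^{(0)}_v$ closed under intersection and under supersets within $\mathcal D^{(0)}_v$. A finite $\mathcal F\subseteq\mathcal D^{(0)}_v$ covers the filter $C$ if some $E\in C$ satisfies $E\subseteq\bigcup\mathcal F$. $v\Lambda^*$ is the set of filters $C$ in $\mathcal D^{(0)}_v$ such that every finite $\mathcal F\subseteq\mathcal D^{(0)}_v$ with $\mathcal F\cap C=\varnothing$ does not cover $C$. *)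

theory Defs
  imports "HOL-Analysis.Analysis"
begin

text \<open>A small category: morphisms form a set Mor; objects are identified with
identity morphisms; rng/src give range and source (as identity morphisms);
cmp a b is the composite a b, meaningful when src a = rng b.\<close>

record 'a smallcat =
  Mor :: "'a set"
  rng :: "'a \<Rightarrow> 'a"
  src :: "'a \<Rightarrow> 'a"
  cmp :: "'a \<Rightarrow> 'a \<Rightarrow> 'a"

definition small_category :: "'a smallcat \<Rightarrow> bool" where
  "small_category L \<longleftrightarrow>
     (\<forall>a\<in>Mor L. rng L a \<in> Mor L \<and> src L a \<in> Mor L
        \<and> rng L (rng L a) = rng L a \<and> src L (rng L a) = rng L a
        \<and> rng L (src L a) = src L a \<and> src L (src L a) = src L a
        \<and> cmp L (rng L a) a = a \<and> cmp L a (src L a) = a)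
   \<and> (\<forall>a\<in>Mor L. \<forall>b\<in>Mor L. src L a = rng L b \<longrightarrow>
        cmp L a b \<in> Mor L \<and> rng L (cmp L a b) = rng L a \<and> src L (cmp L a b) = src L b)
   \<and> (\<forall>a\<in>Mor L. \<forall>b\<in>Mor L. \<forall>c\<in>Mor L. src L a = rng L b \<longrightarrow> src L b = rng L c \<longrightarrow>
        cmp L (cmp L a b) c = cmp L a (cmp L b c))"

definition LCSC :: "'a smallcat \<Rightarrow> bool" where
  "LCSC L \<longleftrightarrow> small_category L \<and>
     (\<forall>a\<in>Mor L. \<forall>b\<in>Mor L. \<forall>c\<in>Mor L. src L a = rng L b \<longrightarrow> src L a = rng L c \<longrightarrow>
        cmp L a b = cmp L a c \<longrightarrow> b = c)"

definition objects :: "'a smallcat \<Rightarrow> 'a set" where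
  "objects L = {a \<in> Mor L. rng L a = a}"

definition vLam :: "'a smallcat \<Rightarrow> 'a \<Rightarrow> 'a set" where
  "vLam L v = {a \<in> Mor L. rng L a = v}"

definition tau :: "'a smallcat \<Rightarrow> 'a \<Rightarrow> 'a \<Rightarrow> 'a option" where
  "tau L b g = (if g \<in> Mor L \<and> rng L g = src L b then Some (cmp L b g) else None)"

text \<open>\<sigma>^\<alpha> as a partial map (defined on \<alpha>\<Lambda>), inverse of \<tau>^\<alpha>.\<close>
definition sigma :: "'a smallcat \<Rightarrow> 'a \<Rightarrow> 'a \<Rightarrow> 'a option" where
  "sigma L a d = (if \<exists>e\<in>Mor L. rng L e = src L a \<and> cmp L a e = d
                  then Some (THE e. e \<in> Mor L \<and> rng L e = src L a \<and> cmp L a e = d)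
                  else None)"

text \<open>A zigzag (\<alpha>_1,\<beta>_1,...,\<alpha>_n,\<beta>_n) is represented as the nonempty list
[(\<alpha>_1,\<beta>_1),...,(\<alpha>_n,\<beta>_n)].\<close>
definition zigzag :: "'a smallcat \<Rightarrow> ('a \<times> 'a) list \<Rightarrow> bool" where
  "zigzag L z \<longleftrightarrow> z \<noteq> [] \<and>
     (\<forall>i<length z. fst (z!i) \<in> Mor L \<and> snd (z!i) \<in> Mor L
        \<and> rng L (fst (z!i)) = rng L (snd (z!i)))
   \<and> (\<forall>i. Suc i < length z \<longrightarrow> src L (fst (z!Suc i)) = src L (snd (z!i)))"

definition zsrc :: "'a smallcat \<Rightarrow> ('a \<times> 'a) list \<Rightarrow> 'a" where
  "zsrc L z = src L (snd (last z))"

text \<open>The zigzag map \<phi>_\<zeta> = \<sigma>^{\<alpha>_1} \<circ> \<tau>^{\<beta>_1} \<circ> ... \<circ> \<sigma>^{\<alpha>_n} \<circ> \<tau>^{\<beta>_n}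
(the pair (\<alpha>_n,\<beta>_n) is applied first).\<close>
fun zzmap :: "'a smallcat \<Rightarrow> ('a \<times> 'a) list \<Rightarrow> 'a \<Rightarrow> 'a option" where
  "zzmap L [] g = Some g"
| "zzmap L ((a,b) # z) g = Option.bind (zzmap L z g) (\<lambda>d. Option.bind (tau L b d) (sigma L a))"

definition zzdom :: "'a smallcat \<Rightarrow> ('a \<times> 'a) list \<Rightarrow> 'a set" where
  "zzdom L z = {g \<in> Mor L. zzmap L z g \<noteq> None}"

definition D0 :: "'a smallcat \<Rightarrow> 'a \<Rightarrow> 'a set set" where
  "D0 L v = {zzdom L z | z. zigzag L z \<and> zsrc L z = v \<and> zzdom L z \<noteq> {}}"

definition Av :: "'a smallcat \<Rightarrow> 'a \<Rightarrow> 'a set set" where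
  "Av L v = \<Inter>{R. ring_of_sets (vLam L v) R \<and> D0 L v \<subseteq> R}"

definition is_filter_in :: "'b set set \<Rightarrow> 'b set set \<Rightarrow> bool" where
  "is_filter_in A F \<longleftrightarrow> F \<noteq> {} \<and> F \<subseteq> A \<and> {} \<notin> F
     \<and> (\<forall>E\<in>F. \<forall>E'\<in>F. E \<inter> E' \<in> F)
     \<and> (\<forall>E\<in>F. \<forall>E'\<in>A. E \<subseteq> E' \<longrightarrow> E' \<in> F)"

definition is_ultrafilter_in :: "'b set set \<Rightarrow> 'b set set \<Rightarrow> bool" where
  "is_ultrafilter_in A U \<longleftrightarrow> is_filter_in A U \<and>
     (\<forall>F. is_filter_in A F \<and> U \<subseteq> F \<longrightarrow> F = U)"

definition upclose :: "'b set set \<Rightarrow> 'b set set \<Rightarrow> 'b set set" where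
  "upclose A B = {E \<in> A. \<exists>X\<in>B. X \<subseteq> E}"

definition is_ultrafilter_base :: "'b set set \<Rightarrow> 'b set set \<Rightarrow> bool" where
  "is_ultrafilter_base A B \<longleftrightarrow> B \<noteq> {} \<and> B \<subseteq> A \<and> {} \<notin> B
     \<and> (\<forall>X\<in>B. \<forall>Y\<in>B. \<exists>Z\<in>B. Z \<subseteq> X \<inter> Y)
     \<and> is_ultrafilter_in A (upclose A B)"

definition covers :: "'b set set \<Rightarrow> 'b set set \<Rightarrow> bool" where
  "covers F C \<longleftrightarrow> (\<exists>E\<in>C. E \<subseteq> \<Union>F)"

definition vLamStar :: "'a smallcat \<Rightarrow> 'a \<Rightarrow> 'a set set set" where
  "vLamStar L v = {C. is_filter_in (D0 L v) C \<and>
     (\<forall>F. finite F \<and> F \<subseteq> D0 L v \<and> F \<inter> C = {} \<longrightarrow> \<not> covers F C)}"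

definition U0 :: "'a smallcat \<Rightarrow> 'a \<Rightarrow> 'a set set \<Rightarrow> 'a set set" where
  "U0 L v C = {E - \<Union>F | E F. E \<in> C \<and> finite F \<and> F \<subseteq> D0 L v \<and> \<not> covers F C}"

end

theory Submission
  imports Defs
begin


definition GR :: "'b set \<Rightarrow> 'b set set \<Rightarrow> 'b set set" where
  "GR X D = \<Inter>{R. ring_of_sets X R \<and> D \<subseteq> R}"

lemma GR_ring: assumes "D \<subseteq> Pow X" shows "ring_of_sets X (GR X D)"
proof -
  let ?K = "{R. ring_of_sets X R \<and> D \<subseteq> R}"
  have ne: "Pow X \<in> ?K" using assms ring_of_sets_Pow[of X] by simp
  have ri: "\<And>R. R \<in> ?K \<Longrightarrow> {} \<in> R \<and> (\<forall>a\<in>R. \<forall>b\<in>R. a \<union> b \<in> R) \<and> (\<forall>a\<in>R. \<forall>b\<in>R. a - b \<in> R)"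
    by (simp add: ring_of_sets_iff)
  have 1: "\<Inter>?K \<subseteq> Pow X" using ne by (rule Inter_lower)
  have 2: "{} \<in> \<Inter>?K" proof (rule InterI) fix R assume "R \<in> ?K" thus "{} \<in> R" using ri by simp qed
  have 3: "\<forall>a\<in>\<Inter>?K. \<forall>b\<in>\<Inter>?K. a \<union> b \<in> \<Inter>?K"
  proof (intro ballI InterI)
    fix a b R assume "a \<in> \<Inter>?K" "b \<in> \<Inter>?K" "R \<in> ?K"
    hence "a \<in> R" "b \<in> R" by (auto simp del: mem_Collect_eq)
    thus "a \<union> b \<in> R" using ri[OF \<open>R \<in> ?K\<close>] by simp
  qed
  have 4: "\<forall>a\<in>\<Inter>?K. \<forall>b\<in>\<Inter>?K. a - b \<in> \<Inter>?K"
  proof (intro ballI InterI)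
    fix a b R assume "a \<in> \<Inter>?K" "b \<in> \<Inter>?K" "R \<in> ?K"
    hence "a \<in> R" "b \<in> R" by (auto simp del: mem_Collect_eq)
    thus "a - b \<in> R" using ri[OF \<open>R \<in> ?K\<close>] by simp
  qed
  have "ring_of_sets X (\<Inter>?K)" unfolding ring_of_sets_iff[of X "\<Inter>?K"] using 1 2 3 4 by (intro conjI)
  thus ?thesis unfolding GR_def .
qed

lemma GR_least: "ring_of_sets X R \<Longrightarrow> D \<subseteq> R \<Longrightarrow> GR X D \<subseteq> R"
  unfolding GR_def by blast

lemma GR_sup: "D \<subseteq> GR X D"
  unfolding GR_def by blast

lemma ubD: "is_ultrafilter_base A B \<Longrightarrow> is_ultrafilter_in A (upclose A B)"
  unfolding is_ultrafilter_base_def by (elim conjE)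

lemma filterD: assumes "is_filter_in A F"
  shows "F \<noteq> {}" "F \<subseteq> A" "{} \<notin> F" "\<And>E E'. E \<in> F \<Longrightarrow> E' \<in> F \<Longrightarrow> E \<inter> E' \<in> F"
    "\<And>E E'. E \<in> F \<Longrightarrow> E' \<in> A \<Longrightarrow> E \<subseteq> E' \<Longrightarrow> E' \<in> F"
  using assms unfolding is_filter_in_def by auto

lemma ufD: assumes "is_ultrafilter_in A U"
  shows "is_filter_in A U" "\<And>F. is_filter_in A F \<Longrightarrow> U \<subseteq> F \<Longrightarrow> F = U"
  using assms unfolding is_ultrafilter_in_def by blast+

lemma uf_crit:
  assumes "is_filter_in A U" "\<forall>Q\<in>A. Q \<in> U \<or> (\<exists>P\<in>U. Q \<inter> P = {})"
  shows "is_ultrafilter_in A U"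
  unfolding is_ultrafilter_in_def
proof (intro conjI allI impI)
  show "is_filter_in A U" by fact
  fix F assume F0: "is_filter_in A F \<and> U \<subseteq> F"
  hence F: "is_filter_in A F" "U \<subseteq> F" by auto
  show "F = U"
  proof
    show "F \<subseteq> U"
    proof
      fix Q assume Q: "Q \<in> F"
      hence "Q \<in> A" using filterD(2)[OF F(1)] by blast
      show "Q \<in> U"
      proof (rule ccontr)
        assume "Q \<notin> U"
        then obtain P where "P \<in> U" "Q \<inter> P = {}" using assms(2) \<open>Q \<in> A\<close> by blast
        hence "Q \<inter> P \<in> F" using F filterD(4)[OF F(1)] Q by blast
        thus False using \<open>Q \<inter> P = {}\<close> filterD(3)[OF F(1)] by auto
      qed
    qed
  qed (use F in blast)
qed

lemma uf_dest:
  assumes R: "ring_of_sets X A" and U: "is_ultrafilter_in A U" and Q: "Q \<in> A" "Q \<notin> U"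
  shows "\<exists>P\<in>U. Q \<inter> P = {}"
proof (rule ccontr)
  assume H: "\<not> ?thesis"
  have UF: "is_filter_in A U" using ufD[OF U] by blast
  note UD = filterD[OF UF]
  have AI: "\<And>a b. a \<in> A \<Longrightarrow> b \<in> A \<Longrightarrow> a \<inter> b \<in> A"
    using R by (metis ring_of_sets.axioms(1) semiring_of_sets.Int)
  obtain P where P: "P \<in> U" using UD(1) by blast
  define F where "F = {S \<in> A. \<exists>P\<in>U. Q \<inter> P \<subseteq> S}"
  have "is_filter_in A F" unfolding is_filter_in_def
  proof (intro conjI ballI impI)
    have "P \<in> A" using P UD(2) by blast
    hence "Q \<inter> P \<in> F" using P Q AI unfolding F_def by blast
    thus "F \<noteq> {}" by blast
    show "F \<subseteq> A" unfolding F_def by blast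
    show "{} \<notin> F" using H unfolding F_def by blast
    fix E E' assume "E \<in> F" "E' \<in> F"
    then obtain P1 P2 where p: "P1 \<in> U" "P2 \<in> U" "Q \<inter> P1 \<subseteq> E" "Q \<inter> P2 \<subseteq> E'" "E \<in> A" "E' \<in> A"
      unfolding F_def by blast
    have "P1 \<inter> P2 \<in> U" using UD(4) p by blast
    moreover have "Q \<inter> (P1 \<inter> P2) \<subseteq> E \<inter> E'" using p by blast
    moreover have "E \<inter> E' \<in> A" using AI p by blast
    ultimately show "E \<inter> E' \<in> F" unfolding F_def by blast
  next
    fix E E' assume "E \<in> F" "E' \<in> A" "E \<subseteq> E'"
    thus "E' \<in> F" unfolding F_def by blast
  qed
  moreover have "U \<subseteq> F" using UD(2) unfolding F_def by blast
  ultimately have "F = U" using ufD(2)[OF U] by blast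
  moreover have "Q \<in> F" using Q P unfolding F_def by blast
  ultimately show False using Q by blast
qed

lemma uf_finite:
  assumes R: "ring_of_sets X A" and U: "is_ultrafilter_in A U"
  shows "finite F \<Longrightarrow> F \<subseteq> A \<Longrightarrow> F \<inter> U = {} \<Longrightarrow> \<exists>P\<in>U. \<Union>F \<inter> P = {}"
proof (induction F rule: finite_induct)
  case empty
  obtain P where "P \<in> U" using filterD(1)[OF ufD(1)[OF U]] by blast
  moreover have "\<Union>{} \<inter> P = {}" by simp
  ultimately show ?case by (rule bexI[rotated])
next
  case (insert x F)
  have "F \<subseteq> A" using insert.prems(1) by simp
  moreover have "F \<inter> U = {}" using insert.prems(2) by auto
  ultimately have "\<exists>P\<in>U. \<Union>F \<inter> P = {}" by (rule insert.IH)
  then obtain P where P: "P \<in> U" "\<Union>F \<inter> P = {}" by (elim bexE)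
  have "x \<in> A" "x \<notin> U" using insert.prems by auto
  then have "\<exists>P'\<in>U. x \<inter> P' = {}" by (rule uf_dest[OF R U])
  then obtain P' where P': "P' \<in> U" "x \<inter> P' = {}" by (elim bexE)
  have "P \<inter> P' \<in> U" using P(1) P'(1) by (rule filterD(4)[OF ufD(1)[OF U]])
  moreover have "\<Union>(insert x F) \<inter> (P \<inter> P') = {}" using P(2) P'(2) by auto
  ultimately show ?case by (rule bexI[rotated])
qed

context
  fixes X :: "'b set" and D :: "'b set set"
  assumes DX: "D \<subseteq> Pow X" and De: "{} \<notin> D"
    and Dint0: "\<forall>E\<in>D. \<forall>E'\<in>D. E \<inter> E' \<noteq> {} \<longrightarrow> E \<inter> E' \<in> D"
begin

lemma Dint: "E \<in> D \<Longrightarrow> E' \<in> D \<Longrightarrow> E \<inter> E' \<noteq> {} \<Longrightarrow> E \<inter> E' \<in> D"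
  using Dint0 by blast

definition "SS = {C. is_filter_in D C \<and> (\<forall>F. finite F \<and> F \<subseteq> D \<and> F \<inter> C = {} \<longrightarrow> \<not> covers F C)}"
definition "uu C = {E - \<Union>F | E F. E \<in> C \<and> finite F \<and> F \<subseteq> D \<and> \<not> covers F C}"

lemma SS_eq: "SS = {C. is_filter_in D C \<and> (\<forall>F. finite F \<and> F \<subseteq> D \<and> F \<inter> C = {} \<longrightarrow> \<not> covers F C)}"
  by (simp only: SS_def)

lemma uu_eq: "uu = (\<lambda>C. {E - \<Union>F | E F. E \<in> C \<and> finite F \<and> F \<subseteq> D \<and> \<not> covers F C})"
  by (rule ext) (simp only: uu_def)

lemma Aring: "ring_of_sets X (GR X D)" using GR_ring[OF DX] .

lemma AInt: "a \<in> GR X D \<Longrightarrow> b \<in> GR X D \<Longrightarrow> a \<inter> b \<in> GR X D"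
  using Aring by (metis ring_of_sets.axioms(1) semiring_of_sets.Int)
lemma ADiff: "a \<in> GR X D \<Longrightarrow> b \<in> GR X D \<Longrightarrow> a - b \<in> GR X D"
  using Aring by (simp add: ring_of_sets_iff)
lemma AUnion: "finite F \<Longrightarrow> F \<subseteq> GR X D \<Longrightarrow> \<Union>F \<in> GR X D"
  using Aring by (metis ring_of_sets.finite_Union)
lemma ApowX: "GR X D \<subseteq> Pow X"
  using Aring by (simp add: ring_of_sets_iff)

lemma cov_iff:
  assumes C: "C \<in> SS" and F: "finite F" "F \<subseteq> D"
  shows "covers F C \<longleftrightarrow> F \<inter> C \<noteq> {}"
proof
  have "\<forall>F. finite F \<and> F \<subseteq> D \<and> F \<inter> C = {} \<longrightarrow> \<not> covers F C" using C unfolding SS_def by blast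
  hence "finite F \<and> F \<subseteq> D \<and> F \<inter> C = {} \<longrightarrow> \<not> covers F C" by (rule spec)
  thus "covers F C \<Longrightarrow> F \<inter> C \<noteq> {}" using F by blast
next
  assume "F \<inter> C \<noteq> {}"
  then obtain G where "G \<in> F" "G \<in> C" by blast
  thus "covers F C" unfolding covers_def by blast
qed

lemma filt0: assumes "C \<in> SS" shows "is_filter_in D C"
  using assms unfolding SS_def by simp

lemma filt: assumes "C \<in> SS" shows "C \<noteq> {}" "C \<subseteq> D" "{} \<notin> C" "\<And>E E'. E \<in> C \<Longrightarrow> E' \<in> C \<Longrightarrow> E \<inter> E' \<in> C"
  "\<And>E E'. E \<in> C \<Longrightarrow> E' \<in> D \<Longrightarrow> E \<subseteq> E' \<Longrightarrow> E' \<in> C"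
  using filterD[OF filt0[OF assms]] by auto

lemma uu_A: assumes "C \<in> SS" shows "uu C \<subseteq> GR X D"
proof
  fix x assume "x \<in> uu C"
  then obtain E F where x: "x = E - \<Union>F" "E \<in> C" "finite F" "F \<subseteq> D" unfolding uu_def by blast
  have "E \<in> D" using x(2) filt(2)[OF assms] by blast
  hence "E \<in> GR X D" using GR_sup by blast
  moreover have "\<Union>F \<in> GR X D" using x(3) AUnion x(4) GR_sup by blast
  ultimately show "x \<in> GR X D" using x(1) ADiff by simp
qed

lemma uu_ne: assumes "C \<in> SS" shows "{} \<notin> uu C"
proof
  assume "{} \<in> uu C"
  then obtain E F where x: "{} = E - \<Union>F" "E \<in> C" "\<not> covers F C" unfolding uu_def by blast
  hence "E \<subseteq> \<Union>F" by auto
  thus False using x unfolding covers_def by blast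
qed

lemma uu_mem: assumes "C \<in> SS" "E \<in> C" "finite F" "F \<subseteq> D" "F \<inter> C = {}" shows "E - \<Union>F \<in> uu C"
proof -
  have "\<not> covers F C" using cov_iff[OF assms(1,3,4)] assms(5) by simp
  thus ?thesis unfolding uu_def using assms(2-4) by blast
qed

lemma uu_cases: assumes "C \<in> SS" "x \<in> uu C"
  obtains E F where "x = E - \<Union>F" "E \<in> C" "finite F" "F \<subseteq> D" "F \<inter> C = {}"
proof -
  obtain E F where x: "x = E - \<Union>F" "E \<in> C" "finite F" "F \<subseteq> D" "\<not> covers F C"
    using assms(2) unfolding uu_def by blast
  have "F \<inter> C = {}" using cov_iff[OF assms(1) x(3,4)] x(5) by simp
  thus ?thesis using that x by blast
qed

lemma uu_nonempty: assumes "C \<in> SS" shows "uu C \<noteq> {}"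
proof -
  obtain E where "E \<in> C" using filt(1)[OF assms] by blast
  hence "E - \<Union>{} \<in> uu C" using uu_mem[OF assms] by blast
  thus ?thesis by blast
qed

lemma uu_int: assumes C: "C \<in> SS" and "x \<in> uu C" "y \<in> uu C" shows "\<exists>z\<in>uu C. z \<subseteq> x \<inter> y"
proof -
  obtain E F where a: "x = E - \<Union>F" "E \<in> C" "finite F" "F \<subseteq> D" "F \<inter> C = {}"
    using uu_cases[OF C \<open>x \<in> uu C\<close>] by blast
  obtain E' F' where b: "y = E' - \<Union>F'" "E' \<in> C" "finite F'" "F' \<subseteq> D" "F' \<inter> C = {}"
    using uu_cases[OF C \<open>y \<in> uu C\<close>] by blast
  have "E \<inter> E' - \<Union>(F \<union> F') \<in> uu C"
    by (rule uu_mem[OF C]) (use a b filt(4)[OF C] in auto)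
  moreover have "E \<inter> E' - \<Union>(F \<union> F') \<subseteq> x \<inter> y" using a b by auto
  ultimately show ?thesis by blast
qed

lemma up_filter: assumes C: "C \<in> SS" shows "is_filter_in (GR X D) (upclose (GR X D) (uu C))"
  unfolding is_filter_in_def upclose_def
proof (intro conjI ballI impI)
  obtain x where "x \<in> uu C" using uu_nonempty[OF C] by blast
  thus "{E \<in> GR X D. \<exists>X\<in>uu C. X \<subseteq> E} \<noteq> {}" using uu_A[OF C] by blast
  show "{E \<in> GR X D. \<exists>X\<in>uu C. X \<subseteq> E} \<subseteq> GR X D" by blast
  show "{} \<notin> {E \<in> GR X D. \<exists>X\<in>uu C. X \<subseteq> E}" using uu_ne[OF C] by auto
  fix E E' assume "E \<in> {E \<in> GR X D. \<exists>X\<in>uu C. X \<subseteq> E}" "E' \<in> {E \<in> GR X D. \<exists>X\<in>uu C. X \<subseteq> E}"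
  then obtain x y where "x \<in> uu C" "y \<in> uu C" "x \<subseteq> E" "y \<subseteq> E'" "E \<in> GR X D" "E' \<in> GR X D" by blast
  moreover obtain z where "z \<in> uu C" "z \<subseteq> x \<inter> y" using uu_int[OF C \<open>x \<in> uu C\<close> \<open>y \<in> uu C\<close>] by blast
  ultimately show "E \<inter> E' \<in> {E \<in> GR X D. \<exists>X\<in>uu C. X \<subseteq> E}" using AInt by blast
next
  fix E E' assume "E \<in> {E \<in> GR X D. \<exists>X\<in>uu C. X \<subseteq> E}" "E' \<in> GR X D" "E \<subseteq> E'"
  thus "E' \<in> {E \<in> GR X D. \<exists>X\<in>uu C. X \<subseteq> E}" by blast
qed

definition "good C Q \<longleftrightarrow> (\<exists>B\<in>uu C. B \<subseteq> Q) \<or> (\<exists>B\<in>uu C. B \<inter> Q = {})"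

lemma good_un: assumes C: "C \<in> SS" and a: "good C a" and b: "good C b" shows "good C (a \<union> b)"
proof (cases "(\<exists>B\<in>uu C. B \<subseteq> a) \<or> (\<exists>B\<in>uu C. B \<subseteq> b)")
  case True
  then obtain B where "B \<in> uu C" "B \<subseteq> a \<union> b" by blast
  thus ?thesis unfolding good_def by blast
next
  case False
  then obtain B B' where B: "B \<in> uu C" "B' \<in> uu C" "B \<inter> a = {}" "B' \<inter> b = {}"
    using a b unfolding good_def by blast
  then obtain Z where Z: "Z \<in> uu C" "Z \<subseteq> B \<inter> B'" using uu_int[OF C] by blast
  have "Z \<inter> (a \<union> b) = {}" using Z(2) B(3,4) by blast
  thus ?thesis using Z(1) unfolding good_def by blast
qed

lemma good_diff: assumes C: "C \<in> SS" and a: "good C a" and b: "good C b" shows "good C (a - b)"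
proof (cases "\<exists>B\<in>uu C. B \<inter> a = {}")
  case True
  then obtain B where "B \<in> uu C" "B \<inter> (a - b) = {}" by blast
  thus ?thesis unfolding good_def by blast
next
  case F1: False
  show ?thesis
  proof (cases "\<exists>B\<in>uu C. B \<subseteq> b")
    case True
    then obtain B where "B \<in> uu C" "B \<inter> (a - b) = {}" by blast
    thus ?thesis unfolding good_def by blast
  next
    case False
    have "\<exists>B\<in>uu C. B \<subseteq> a" using a F1 unfolding good_def by blast
    moreover have "\<exists>B\<in>uu C. B \<inter> b = {}" using b False unfolding good_def by blast
    ultimately obtain B B' where B: "B \<in> uu C" "B' \<in> uu C" "B \<subseteq> a" "B' \<inter> b = {}" by blast
    then obtain Z where Z: "Z \<in> uu C" "Z \<subseteq> B \<inter> B'" using uu_int[OF C] by blast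
    have "Z \<subseteq> a - b" using Z(2) B(3,4) by blast
    thus ?thesis using Z(1) unfolding good_def by blast
  qed
qed

lemma dich: assumes C: "C \<in> SS" and Q: "Q \<in> GR X D"
  shows "(\<exists>B\<in>uu C. B \<subseteq> Q) \<or> (\<exists>B\<in>uu C. B \<inter> Q = {})"
proof -
  define R where "R = {Q \<in> Pow X. good C Q}"
  have "ring_of_sets X R" unfolding ring_of_sets_iff
  proof (intro conjI ballI)
    show "R \<subseteq> Pow X" unfolding R_def by blast
    obtain B where "B \<in> uu C" using uu_nonempty[OF C] by blast
    hence "good C {}" unfolding good_def by blast
    thus "{} \<in> R" unfolding R_def by blast
    fix a b assume a: "a \<in> R" and b: "b \<in> R"
    hence "good C a" "good C b" "a \<subseteq> X" "b \<subseteq> X" unfolding R_def by auto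
    thus "a \<union> b \<in> R" "a - b \<in> R" unfolding R_def using good_un[OF C] good_diff[OF C] by auto
  qed
  moreover have "D \<subseteq> R"
  proof
    fix G assume G: "G \<in> D"
    hence GX: "G \<in> Pow X" using DX by blast
    show "G \<in> R"
    proof (cases "G \<in> C")
      case True
      hence "G - \<Union>{} \<in> uu C" using uu_mem[OF C] by blast
      hence "good C G" unfolding good_def by auto
      thus ?thesis using GX unfolding R_def by blast
    next
      case False
      obtain E where "E \<in> C" using filt(1)[OF C] by blast
      hence "E - \<Union>{G} \<in> uu C" using uu_mem[OF C, of E "{G}"] G False by auto
      moreover have "(E - \<Union>{G}) \<inter> G = {}" by blast
      ultimately have "good C G" unfolding good_def by blast
      thus ?thesis using GX unfolding R_def by blast
    qed
  qed
  ultimately have "GR X D \<subseteq> R" by (rule GR_least)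
  thus ?thesis using Q unfolding R_def good_def by blast
qed

lemma L2: assumes C: "C \<in> SS" shows "is_ultrafilter_base (GR X D) (uu C)"
  unfolding is_ultrafilter_base_def
proof (intro conjI)
  show "uu C \<noteq> {}" "uu C \<subseteq> GR X D" "{} \<notin> uu C" using uu_nonempty uu_A uu_ne C by auto
  show "\<forall>X\<in>uu C. \<forall>Y\<in>uu C. \<exists>Z\<in>uu C. Z \<subseteq> X \<inter> Y" using uu_int[OF C] by blast
  show "is_ultrafilter_in (GR X D) (upclose (GR X D) (uu C))"
  proof (rule uf_crit[OF up_filter[OF C]], intro ballI)
    fix Q assume Q: "Q \<in> GR X D"
    from dich[OF C Q] show "Q \<in> upclose (GR X D) (uu C) \<or> (\<exists>P\<in>upclose (GR X D) (uu C). Q \<inter> P = {})"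
    proof
      assume "\<exists>B\<in>uu C. B \<subseteq> Q" thus ?thesis using Q unfolding upclose_def by blast
    next
      assume "\<exists>B\<in>uu C. B \<inter> Q = {}"
      then obtain B where "B \<in> uu C" "B \<inter> Q = {}" by blast
      moreover hence "B \<in> upclose (GR X D) (uu C)" using uu_A[OF C] unfolding upclose_def by blast
      ultimately show ?thesis by blast
    qed
  qed
qed

lemma L3: assumes C: "C \<in> SS" shows "upclose (GR X D) (uu C) \<inter> D = C"
proof
  show "C \<subseteq> upclose (GR X D) (uu C) \<inter> D"
  proof
    fix G assume G: "G \<in> C"
    hence "G - \<Union>{} \<in> uu C" using uu_mem[OF C] by blast
    thus "G \<in> upclose (GR X D) (uu C) \<inter> D" using G filt(2)[OF C] GR_sup unfolding upclose_def by auto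
  qed
  show "upclose (GR X D) (uu C) \<inter> D \<subseteq> C"
  proof
    fix G assume "G \<in> upclose (GR X D) (uu C) \<inter> D"
    then obtain B where G: "G \<in> D" "B \<in> uu C" "B \<subseteq> G" unfolding upclose_def by blast
    then obtain E F where a: "B = E - \<Union>F" "E \<in> C" "finite F" "F \<subseteq> D" "F \<inter> C = {}"
      using uu_cases[OF C] by blast
    show "G \<in> C"
    proof (rule ccontr)
      assume "G \<notin> C"
      hence "\<not> covers (insert G F) C" using C a G unfolding SS_def by auto
      moreover have "E \<subseteq> \<Union>(insert G F)" using a G by auto
      ultimately show False using a unfolding covers_def by blast
    qed
  qed
qed

lemma L4: assumes U: "is_ultrafilter_in (GR X D) U" shows "U \<inter> D \<in> SS"
proof -
  have UF: "is_filter_in (GR X D) U" using ufD(1)[OF U] .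
  note UD = filterD[OF UF]
  have Usub: "U \<subseteq> GR X D" "{} \<notin> U" using UD by auto
  have Uint: "\<And>a b. a \<in> U \<Longrightarrow> b \<in> U \<Longrightarrow> a \<inter> b \<in> U" using UD(4) .
  have Uup: "\<And>a b. a \<in> U \<Longrightarrow> b \<in> GR X D \<Longrightarrow> a \<subseteq> b \<Longrightarrow> b \<in> U" using UD(5) .
  obtain P where P: "P \<in> U" using UD(1) by blast
  define R where "R = {Q \<in> Pow X. \<exists>F. finite F \<and> F \<subseteq> D \<and> Q \<subseteq> \<Union>F}"
  have "ring_of_sets X R" unfolding ring_of_sets_iff
  proof (intro conjI ballI)
    show "R \<subseteq> Pow X" unfolding R_def by blast
    show "{} \<in> R" unfolding R_def by blast
    fix a b assume a: "a \<in> R" and b: "b \<in> R"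
    then obtain F F' where "finite F" "F \<subseteq> D" "a \<subseteq> \<Union>F" "finite F'" "F' \<subseteq> D" "b \<subseteq> \<Union>F'"
      unfolding R_def by blast
    hence "finite (F \<union> F')" "F \<union> F' \<subseteq> D" "a \<union> b \<subseteq> \<Union>(F \<union> F')" by auto
    thus "a \<union> b \<in> R" using a b unfolding R_def by blast
    show "a - b \<in> R" using a unfolding R_def by blast
  qed
  moreover have "D \<subseteq> R"
  proof
    fix G assume "G \<in> D"
    hence "G \<in> Pow X" "finite {G} \<and> {G} \<subseteq> D \<and> G \<subseteq> \<Union>{G}" using DX by auto
    thus "G \<in> R" unfolding R_def by blast
  qed
  ultimately have "GR X D \<subseteq> R" by (rule GR_least)
  hence "P \<in> R" using P Usub(1) by (meson subsetD)
  then obtain F where F: "finite F" "F \<subseteq> D" "P \<subseteq> \<Union>F" unfolding R_def by auto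
  have FA: "F \<subseteq> GR X D" using F GR_sup by blast
  have "F \<inter> U \<noteq> {}"
  proof
    assume "F \<inter> U = {}"
    obtain P' where "P' \<in> U" "\<Union>F \<inter> P' = {}" using uf_finite[OF Aring U F(1) FA \<open>F \<inter> U = {}\<close>] by (elim bexE)
    hence "P \<inter> P' = {}" using F(3) by auto
    thus False using Uint[OF P \<open>P' \<in> U\<close>] Usub(2) by simp
  qed
  then obtain G where G: "G \<in> F" "G \<in> U" by blast
  hence ne: "U \<inter> D \<noteq> {}" using F(2) by blast
  have filt: "is_filter_in D (U \<inter> D)" unfolding is_filter_in_def
  proof (intro conjI ballI impI)
    show "U \<inter> D \<noteq> {}" by fact
    show "U \<inter> D \<subseteq> D" by blast
    show "{} \<notin> U \<inter> D" using Usub by blast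
    fix E E' assume E: "E \<in> U \<inter> D" "E' \<in> U \<inter> D"
    hence i: "E \<inter> E' \<in> U" using Uint by blast
    hence "E \<inter> E' \<noteq> {}" using Usub(2) by metis
    hence "E \<inter> E' \<in> D" using Dint E by blast
    thus "E \<inter> E' \<in> U \<inter> D" using i by blast
  next
    fix E E' assume "E \<in> U \<inter> D" "E' \<in> D" "E \<subseteq> E'"
    thus "E' \<in> U \<inter> D" using Uup GR_sup by blast
  qed
  have cov: "\<forall>F. finite F \<and> F \<subseteq> D \<and> F \<inter> (U \<inter> D) = {} \<longrightarrow> \<not> covers F (U \<inter> D)"
  proof (intro allI impI)
    fix F assume F: "finite F \<and> F \<subseteq> D \<and> F \<inter> (U \<inter> D) = {}"
    have FU: "F \<inter> U = {}" using F by auto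
    have FA: "F \<subseteq> GR X D" using F GR_sup by auto
    have "finite F" using F by simp
    obtain P' where P': "P' \<in> U" "\<Union>F \<inter> P' = {}" using uf_finite[OF Aring U \<open>finite F\<close> FA FU] by (elim bexE)
    show "\<not> covers F (U \<inter> D)"
    proof
      assume "covers F (U \<inter> D)"
      then obtain E where "E \<in> U" "E \<subseteq> \<Union>F" unfolding covers_def by blast
      hence "E \<inter> P' = {}" using P'(2) by auto
      thus False using Uint[OF \<open>E \<in> U\<close> P'(1)] Usub(2) by simp
    qed
  qed
  show ?thesis unfolding SS_def using filt cov by blast
qed

lemma L5: assumes U: "is_ultrafilter_in (GR X D) U" shows "upclose (GR X D) (uu (U \<inter> D)) = U"
proof -
  have C: "U \<inter> D \<in> SS" using L4[OF U] .
  have UF: "is_filter_in (GR X D) U" using ufD(1)[OF U] .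
  note UD = filterD[OF UF]
  have Usub: "U \<subseteq> GR X D" "{} \<notin> U" using UD by auto
  have Uint: "\<And>a b. a \<in> U \<Longrightarrow> b \<in> U \<Longrightarrow> a \<inter> b \<in> U" using UD(4) .
  have Uup: "\<And>a b. a \<in> U \<Longrightarrow> b \<in> GR X D \<Longrightarrow> a \<subseteq> b \<Longrightarrow> b \<in> U" using UD(5) .
  have "uu (U \<inter> D) \<subseteq> U"
  proof
    fix x assume "x \<in> uu (U \<inter> D)"
    obtain E F where a: "x = E - \<Union>F" "E \<in> U \<inter> D" "finite F" "F \<subseteq> D" "F \<inter> (U \<inter> D) = {}"
      by (rule uu_cases[OF C \<open>x \<in> uu (U \<inter> D)\<close>])
    have FU: "F \<inter> U = {}" using a(4,5) by auto
    have FA: "F \<subseteq> GR X D" using a(4) GR_sup by (rule order_trans)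
    obtain P' where P': "P' \<in> U" "\<Union>F \<inter> P' = {}" using uf_finite[OF Aring U a(3) FA FU] by (elim bexE)
    have "E \<in> U" using a(2) by simp
    hence "E \<inter> P' \<in> U" using Uint P'(1) by simp
    moreover have "E \<inter> P' \<subseteq> x" using a(1) P'(2) by auto
    moreover have "x \<in> GR X D" using uu_A[OF C] \<open>x \<in> uu (U \<inter> D)\<close> by blast
    ultimately show "x \<in> U" using Uup by blast
  qed
  hence sub: "upclose (GR X D) (uu (U \<inter> D)) \<subseteq> U" using Uup unfolding upclose_def by blast
  have ult: "is_ultrafilter_in (GR X D) (upclose (GR X D) (uu (U \<inter> D)))"
    using L2[OF C] by (rule ubD)
  show ?thesis using ufD(2)[OF ult UF sub] by simp
qed

lemma L2u: "C \<in> SS \<Longrightarrow> is_ultrafilter_in (GR X D) (upclose (GR X D) (uu C))"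
  using L2 by (rule ubD)

lemma abstract_main:
  shows "(\<forall>C\<in>SS. is_ultrafilter_base (GR X D) (uu C))
    \<and> bij_betw (\<lambda>C. upclose (GR X D) (uu C)) SS {U. is_ultrafilter_in (GR X D) U}
    \<and> (\<forall>C\<in>SS. upclose (GR X D) (uu C) \<inter> D = C)
    \<and> (\<forall>U. is_ultrafilter_in (GR X D) U \<longrightarrow>
          U \<inter> D \<in> SS \<and> upclose (GR X D) (uu (U \<inter> D)) = U)"
proof -
  have inj: "inj_on (\<lambda>C. upclose (GR X D) (uu C)) SS"
  proof (rule inj_onI)
    fix C C' assume a: "C \<in> SS" "C' \<in> SS" and e: "upclose (GR X D) (uu C) = upclose (GR X D) (uu C')"
    have "C = upclose (GR X D) (uu C) \<inter> D" using L3[OF a(1)] by (rule sym)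
    also have "\<dots> = upclose (GR X D) (uu C') \<inter> D" using e by (rule arg_cong)
    also have "\<dots> = C'" using L3[OF a(2)] .
    finally show "C = C'" .
  qed
  have s1: "(\<lambda>C. upclose (GR X D) (uu C)) ` SS \<subseteq> {U. is_ultrafilter_in (GR X D) U}"
  proof
    fix U assume "U \<in> (\<lambda>C. upclose (GR X D) (uu C)) ` SS"
    then obtain C where "C \<in> SS" "U = upclose (GR X D) (uu C)" by (elim imageE)
    thus "U \<in> {U. is_ultrafilter_in (GR X D) U}" using L2u by simp
  qed
  have s2: "{U. is_ultrafilter_in (GR X D) U} \<subseteq> (\<lambda>C. upclose (GR X D) (uu C)) ` SS"
  proof
    fix U assume "U \<in> {U. is_ultrafilter_in (GR X D) U}"
    hence U: "is_ultrafilter_in (GR X D) U" by simp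
    have "U = upclose (GR X D) (uu (U \<inter> D))" using L5[OF U] by simp
    thus "U \<in> (\<lambda>C. upclose (GR X D) (uu C)) ` SS" using L4[OF U] by (rule image_eqI)
  qed
  have b: "bij_betw (\<lambda>C. upclose (GR X D) (uu C)) SS {U. is_ultrafilter_in (GR X D) U}"
    unfolding bij_betw_def using inj s1 s2 by (intro conjI equalityI)
  have c1: "\<forall>C\<in>SS. is_ultrafilter_base (GR X D) (uu C)" using L2 by (intro ballI)
  have c3: "\<forall>C\<in>SS. upclose (GR X D) (uu C) \<inter> D = C" using L3 by (intro ballI)
  have c4: "\<forall>U. is_ultrafilter_in (GR X D) U \<longrightarrow> U \<inter> D \<in> SS \<and> upclose (GR X D) (uu (U \<inter> D)) = U"
    using L4 L5 by (intro allI impI conjI)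
  show ?thesis using c1 b c3 c4 by (intro conjI)
qed

end




definition swp :: "'a \<times> 'a \<Rightarrow> 'a \<times> 'a" where "swp p = (snd p, fst p)"
definition rs :: "('a \<times> 'a) list \<Rightarrow> ('a \<times> 'a) list" where "rs z = rev (map swp z)"

definition zgood :: "'a smallcat \<Rightarrow> ('a \<times> 'a) list \<Rightarrow> bool" where
  "zgood L z \<longleftrightarrow> (\<forall>p\<in>set z. fst p \<in> Mor L \<and> snd p \<in> Mor L \<and> rng L (fst p) = rng L (snd p))"

definition zchain :: "'a smallcat \<Rightarrow> ('a \<times> 'a) list \<Rightarrow> bool" where
  "zchain L z \<longleftrightarrow> successively (\<lambda>p q. src L (fst q) = src L (snd p)) z"

lemma zigzag_alt: "zigzag L z \<longleftrightarrow> z \<noteq> [] \<and> zgood L z \<and> zchain L z"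
  unfolding zigzag_def zgood_def zchain_def successively_conv_nth
  by (simp add: all_set_conv_all_nth)

lemma zgood_rs: "zgood L (rs z) \<longleftrightarrow> zgood L z"
  unfolding zgood_def rs_def swp_def by auto

lemma zchain_rs: "zchain L (rs z) \<longleftrightarrow> zchain L z"
proof -
  have e: "(\<lambda>x y. src L (snd x) = src L (fst y)) = (\<lambda>p q. src L (fst q) = src L (snd p))"
    by (rule ext, rule ext, rule eq_commute)
  show ?thesis unfolding zchain_def rs_def swp_def successively_rev successively_map fst_conv snd_conv e ..
qed

lemma rs_last: "z \<noteq> [] \<Longrightarrow> last (rs z) = swp (hd z)"
  unfolding rs_def by (simp add: last_rev hd_map)
lemma rs_hd: "z \<noteq> [] \<Longrightarrow> hd (rs z) = swp (last z)"
  unfolding rs_def by (simp add: hd_rev last_map)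
lemma rs_ne: "rs z \<noteq> [] \<longleftrightarrow> z \<noteq> []"
  unfolding rs_def by simp

lemma zz_append: "zzmap L (z1 @ z2) g = Option.bind (zzmap L z2 g) (zzmap L z1)"
proof (induction z1)
  case Nil then show ?case by (cases "zzmap L z2 g") auto
next
  case (Cons p z1)
  obtain a b where p: "p = (a,b)" by (cases p)
  show ?case using Cons by (cases "zzmap L z2 g") (auto simp: p)
qed

context
  fixes L :: "'a smallcat"
  assumes LC: "LCSC L"
begin

lemma sc: "small_category L" using LC unfolding LCSC_def by blast

lemma cmp_ok: "a \<in> Mor L \<Longrightarrow> b \<in> Mor L \<Longrightarrow> src L a = rng L b \<Longrightarrow>
   cmp L a b \<in> Mor L \<and> rng L (cmp L a b) = rng L a \<and> src L (cmp L a b) = src L b"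
  using sc unfolding small_category_def by blast

lemma lcanc: "a \<in> Mor L \<Longrightarrow> b \<in> Mor L \<Longrightarrow> c \<in> Mor L \<Longrightarrow> src L a = rng L b \<Longrightarrow> src L a = rng L c \<Longrightarrow>
   cmp L a b = cmp L a c \<Longrightarrow> b = c"
  using LC unfolding LCSC_def by blast

lemma sigma_cmp: assumes "a \<in> Mor L" "e \<in> Mor L" "rng L e = src L a"
  shows "sigma L a (cmp L a e) = Some e"
proof -
  have ex: "\<exists>e'\<in>Mor L. rng L e' = src L a \<and> cmp L a e' = cmp L a e" using assms by blast
  have s: "sigma L a (cmp L a e) = Some (THE e'. e' \<in> Mor L \<and> rng L e' = src L a \<and> cmp L a e' = cmp L a e)"
    unfolding sigma_def using ex by (rule if_P)
  have "(THE e'. e' \<in> Mor L \<and> rng L e' = src L a \<and> cmp L a e' = cmp L a e) = e"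
  proof (rule the_equality)
    show "e \<in> Mor L \<and> rng L e = src L a \<and> cmp L a e = cmp L a e" using assms by simp
    fix e' assume "e' \<in> Mor L \<and> rng L e' = src L a \<and> cmp L a e' = cmp L a e"
    hence "e' \<in> Mor L" "rng L e' = src L a" "cmp L a e' = cmp L a e" by auto
    thus "e' = e" using lcanc[of a e' e] assms by metis
  qed
  thus ?thesis using s by simp
qed

lemma sigma_SomeD: assumes "a \<in> Mor L" "sigma L a d = Some e"
  shows "e \<in> Mor L \<and> rng L e = src L a \<and> cmp L a e = d"
proof -
  have ex: "\<exists>e'\<in>Mor L. rng L e' = src L a \<and> cmp L a e' = d"
    using assms(2) unfolding sigma_def by (auto split: if_splits)
  then obtain e' where e': "e' \<in> Mor L" "rng L e' = src L a" "cmp L a e' = d" by blast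
  have "sigma L a d = Some e'" using sigma_cmp[OF assms(1) e'(1,2)] e'(3) by simp
  thus ?thesis using assms(2) e' by simp
qed

lemma zz_step: assumes "a \<in> Mor L" "b \<in> Mor L"
  "Option.bind (tau L b d) (sigma L a) = Some h"
  shows "d \<in> Mor L \<and> rng L d = src L b \<and> h \<in> Mor L \<and> rng L h = src L a \<and> cmp L a h = cmp L b d"
proof -
  have d: "d \<in> Mor L" "rng L d = src L b" and t: "tau L b d = Some (cmp L b d)"
    using assms(3) unfolding tau_def by (auto split: if_splits)
  have "sigma L a (cmp L b d) = Some h" using assms(3) t by simp
  thus ?thesis using sigma_SomeD[OF assms(1)] d by blast
qed

lemma zz_mor: "zgood L z \<Longrightarrow> g \<in> Mor L \<Longrightarrow> zzmap L z g = Some h \<Longrightarrow> h \<in> Mor L"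
proof (induction z arbitrary: h)
  case Nil then show ?case by simp
next
  case (Cons p z)
  obtain a b where p: "p = (a,b)" by (cases p)
  have ab: "a \<in> Mor L" "b \<in> Mor L" "zgood L z" using Cons.prems(1) unfolding zgood_def p by auto
  obtain d where d: "zzmap L z g = Some d" using Cons.prems(3) p by (cases "zzmap L z g") auto
  have "Option.bind (tau L b d) (sigma L a) = Some h" using Cons.prems(3) p d by simp
  thus ?case using zz_step[OF ab(1,2)] by blast
qed

lemma zz_inv: "zgood L z \<Longrightarrow> g \<in> Mor L \<Longrightarrow> zzmap L z g = Some h \<Longrightarrow> zzmap L (rs z) h = Some g"
proof (induction z arbitrary: h)
  case Nil then show ?case by (simp add: rs_def)
next
  case (Cons p z)
  obtain a b where p: "p = (a,b)" by (cases p)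
  have ab: "a \<in> Mor L" "b \<in> Mor L" "zgood L z" using Cons.prems(1) unfolding zgood_def p by auto
  obtain d where d: "zzmap L z g = Some d" using Cons.prems(3) p by (cases "zzmap L z g") auto
  have "Option.bind (tau L b d) (sigma L a) = Some h" using Cons.prems(3) p d by simp
  hence st: "d \<in> Mor L \<and> rng L d = src L b \<and> h \<in> Mor L \<and> rng L h = src L a \<and> cmp L a h = cmp L b d"
    using zz_step[OF ab(1,2)] by blast
  have "tau L a h = Some (cmp L a h)" using st unfolding tau_def by simp
  hence "zzmap L [(b,a)] h = sigma L b (cmp L b d)" using st by simp
  also have "\<dots> = Some d" using sigma_cmp[OF ab(2)] st by simp
  finally have 1: "zzmap L [(b,a)] h = Some d" .
  have 2: "zzmap L (rs z) d = Some g" using Cons.IH[OF ab(3) Cons.prems(2) d] .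
  have "rs (p # z) = rs z @ [(b,a)]" unfolding rs_def p swp_def by simp
  thus ?case using 1 2 by (simp add: zz_append)
qed


lemma zzdom_sub: assumes "zigzag L z" "zsrc L z = v" shows "zzdom L z \<subseteq> vLam L v"
proof
  fix g assume g: "g \<in> zzdom L z"
  have ne: "z \<noteq> []" using assms(1) unfolding zigzag_def by blast
  obtain a b where ab: "last z = (a,b)" by (cases "last z")
  have z: "z = butlast z @ [(a,b)]" using ne ab by (metis append_butlast_last_id)
  have "zzmap L z g \<noteq> None" using g unfolding zzdom_def by blast
  hence "zzmap L [(a,b)] g \<noteq> None" using z by (metis zz_append bind.bind_lunit option.collapse bind_eq_None_conv)
  hence "tau L b g \<noteq> None" by (cases "tau L b g") auto
  hence "rng L g = src L b" unfolding tau_def by (auto split: if_splits)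
  moreover have "src L b = v" using assms(2) ab unfolding zsrc_def by simp
  ultimately show "g \<in> vLam L v" using g unfolding zzdom_def vLam_def by blast
qed

lemma D0_sub: "D0 L v \<subseteq> Pow (vLam L v)"
  unfolding D0_def using zzdom_sub by blast

lemma D0_int: assumes E: "E \<in> D0 L v" and E': "E' \<in> D0 L v" and ne: "E \<inter> E' \<noteq> {}"
  shows "E \<inter> E' \<in> D0 L v"
proof -
  obtain z1 where z1: "E = zzdom L z1" "zigzag L z1" "zsrc L z1 = v" using E unfolding D0_def by blast
  obtain z2 where z2: "E' = zzdom L z2" "zigzag L z2" "zsrc L z2 = v" using E' unfolding D0_def by blast
  define W where "W = rs z1 @ z1 @ rs z2 @ z2"
  have n1: "z1 \<noteq> []" "zgood L z1" "zchain L z1" using z1(2) unfolding zigzag_alt by auto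
  have n2: "z2 \<noteq> []" "zgood L z2" "zchain L z2" using z2(2) unfolding zigzag_alt by auto
  have gW: "zgood L W" using n1 n2 zgood_rs[of L z1] zgood_rs[of L z2] unfolding W_def zgood_def by auto
  have j1: "src L (fst (hd z1)) = src L (snd (last (rs z1)))" using rs_last[OF n1(1)] by (simp add: swp_def)
  have j2: "src L (fst (hd (rs z2))) = src L (snd (last z1))"
    using rs_hd[OF n2(1)] z1(3) z2(3) unfolding zsrc_def by (simp add: swp_def)
  have j3: "src L (fst (hd z2)) = src L (snd (last (rs z2)))" using rs_last[OF n2(1)] by (simp add: swp_def)
  have cW: "zchain L W" unfolding W_def zchain_def
    using n1 n2 zchain_rs[of L z1] zchain_rs[of L z2] j1 j2 j3 rs_ne[of z1] rs_ne[of z2]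
    unfolding zchain_def by (simp add: successively_append_iff)
  have "W \<noteq> []" using n1(1) unfolding W_def by simp
  hence wz: "zigzag L W" using gW cW unfolding zigzag_alt by simp
  have ws: "zsrc L W = v" using z2(3) n2(1) unfolding W_def zsrc_def by simp
  have dom: "zzdom L W = E \<inter> E'"
  proof
    show "zzdom L W \<subseteq> E \<inter> E'"
    proof
      fix g assume g: "g \<in> zzdom L W"
      hence gm: "g \<in> Mor L" and nn: "zzmap L W g \<noteq> None" unfolding zzdom_def by auto
      have "zzmap L z2 g \<noteq> None"
        using nn unfolding W_def by (cases "zzmap L z2 g") (auto simp: zz_append)
      then obtain h2 where h2: "zzmap L z2 g = Some h2" by blast
      have "zzmap L (rs z2) h2 = Some g" using zz_inv[OF n2(2) gm h2] .
      hence "zzmap L z1 g \<noteq> None" using nn h2 unfolding W_def by (cases "zzmap L z1 g") (auto simp: zz_append)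
      thus "g \<in> E \<inter> E'" using gm h2 z1(1) z2(1) unfolding zzdom_def by auto
    qed
    show "E \<inter> E' \<subseteq> zzdom L W"
    proof
      fix g assume "g \<in> E \<inter> E'"
      then obtain h1 h2 where gm: "g \<in> Mor L" and h1: "zzmap L z1 g = Some h1" and h2: "zzmap L z2 g = Some h2"
        using z1(1) z2(1) unfolding zzdom_def by auto
      have i1: "zzmap L (rs z1) h1 = Some g" using zz_inv[OF n1(2) gm h1] .
      have i2: "zzmap L (rs z2) h2 = Some g" using zz_inv[OF n2(2) gm h2] .
      have "zzmap L W g = Some g" unfolding W_def using h1 h2 i1 i2 by (simp add: zz_append)
      thus "g \<in> zzdom L W" using gm unfolding zzdom_def by simp
    qed
  qed
  show ?thesis unfolding D0_def using wz ws dom ne by (metis (mono_tags, lifting) mem_Collect_eq)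
qed

end


theorem mainTheorem4:
  fixes L :: "'a smallcat" and v :: 'a
  assumes "LCSC L" and "v \<in> objects L"
  shows "(\<forall>C\<in>vLamStar L v. is_ultrafilter_base (Av L v) (U0 L v C))
    \<and> bij_betw (\<lambda>C. upclose (Av L v) (U0 L v C)) (vLamStar L v) {U. is_ultrafilter_in (Av L v) U}
    \<and> (\<forall>C\<in>vLamStar L v. upclose (Av L v) (U0 L v C) \<inter> D0 L v = C)
    \<and> (\<forall>U. is_ultrafilter_in (Av L v) U \<longrightarrow>
          U \<inter> D0 L v \<in> vLamStar L v \<and> upclose (Av L v) (U0 L v (U \<inter> D0 L v)) = U)"
proof -
  have h1: "D0 L v \<subseteq> Pow (vLam L v)" by (rule D0_sub[OF assms(1)])
  have h2: "{} \<notin> D0 L v" unfolding D0_def by auto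
  have h3: "\<forall>E\<in>D0 L v. \<forall>E'\<in>D0 L v. E \<inter> E' \<noteq> {} \<longrightarrow> E \<inter> E' \<in> D0 L v"
    using D0_int[OF assms(1)] by blast
  have e1: "Av L v = GR (vLam L v) (D0 L v)" unfolding Av_def GR_def ..
  show ?thesis using abstract_main[OF h1 h2 h3]
    unfolding SS_eq[OF h1 h2 h3] uu_eq[OF h1 h2 h3] e1 vLamStar_def U0_def .
qed

end
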